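(* Assume $\Sigma_1=\sigma_1^2\mathbf I_K$ with $\sigma_1>0$, and let $\nu_2>0$. Then for every $(\mathbf t,\mathbf c(\mathbf t))\in\mathcal A_K(\alpha_0)$, $$\omega_K\{\mathbf 0,\Sigma_1,\nu_2,\mathbf t,\mathbf c(\mathbf t)\}\le\omega_K\{\mathbf 0,\Sigma_1,\nu_2,\mathbf 0,\mathbf c^*\}.$$ That is, at $\boldsymbol\theta=\mathbf 0$ the multivariate cTOST is the most powerful among all tests defined by pairs in $\mathcal A_K(\alpha_0)$.
   Context: Multivariate setting. Fix an integer $K\ge2$, $c_0>0$, $\alpha_0\in(0,1/2)$, $\nu_2>0$, and a positive definite $K\times K$ matrix $\Sigma_1$ with diagonal entries $\sigma_{1,k}^2$. Let $\widehat{\boldsymbol\theta}\sim\mathcal N_K(\boldsymbol\theta,\Sigma_1)$ and $\widehat\Sigma_1$ be independent with $\nu_2\widehat\Sigma_1\sim W_K(\Sigma_1,\nu_2)$ (Wishart), and let $\widehat\sigma_{1,k}$ be the square root of the $k$th diagonal entry of $\widehat\Sigma_1$. For $\mathbf t\in[0,\infty)^K$, $\mathbf c\in(0,\infty)^K$ define $$\omega_K(\boldsymbol\theta,\Sigma_1,\nu_2,\mathbf t,\mathbf c)=\Pr\Big(\bigcap_{k=1}^K\{t_k\widehat\sigma_{1,k}-c_k<\widehat\theta_k<c_k-t_k\widehat\sigma_{1,k}\}\Big).$$ The marginal (univariate) rejection probability is $\omega(\theta,s,\nu_2,t,c)=\Pr(t\widehat\sigma-c<\widehat\theta<c-t\widehat\sigma)$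 for independent $\widehat\theta\sim\mathcal N(\theta,s^2)$, $\nu_2\widehat\sigma^2/s^2\sim\chi^2_{\nu_2}$. Define $\mathcal A_K(\alpha_0)$ as the set of pairs $(\mathbf t,\mathbf c)$ with $\mathbf t\in[0,\infty)^K$, $\mathbf c\in(0,\infty)^K$, $\sup_{\boldsymbol\theta\notin(-c_0,c_0)^K}\omega_K(\boldsymbol\theta,\Sigma_1,\nu_2,\mathbf t,\mathbf c)=\alpha_0$, and $\omega(c_0,\sigma_{1,1},\nu_2,t_1,c_1)=\cdots=\omega(c_0,\sigma_{1,K},\nu_2,t_K,c_K)$ (equal marginal sizes). For fixed $\mathbf t$, $\mathbf c(\mathbf t)=(c_1(\mathbf t),\ldots,c_K(\mathbf t))$ denotes the unique $\mathbf c$ with $(\mathbf t,\mathbf c)\in\mathcal A_K(\alpha_0)$. The multivariate cTOST corresponds to $\mathbf t=\mathbf 0$ and $\mathbf c^*:=\mathbf c(\mathbf 0)$. *)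

theory Defs
  imports "HOL-Probability.Probability"
begin

definition chisq_density :: "real \<Rightarrow> real \<Rightarrow> real" where
  "chisq_density nu x =
     (if x \<le> 0 then 0
      else x powr (nu / 2 - 1) * exp (- x / 2) / (2 powr (nu / 2) * Gamma (nu / 2)))"

definition sigma_hat_distr :: "real \<Rightarrow> real \<Rightarrow> real measure" where
  "sigma_hat_distr s nu =
     distr (density lborel (\<lambda>x. ennreal (chisq_density nu x))) borel
           (\<lambda>x. sqrt (s\<^sup>2 * x / nu))"

definition coord_distr :: "real \<Rightarrow> real \<Rightarrow> real \<Rightarrow> (real \<times> real) measure" where
  "coord_distr theta s nu =
     density lborel (\<lambda>x. ennreal (normal_density theta s x)) \<Otimes>\<^sub>M sigma_hat_distr s nu"

definition omega :: "real \<Rightarrow> real \<Rightarrow> real \<Rightarrow> real \<Rightarrow> real \<Rightarrow> real" where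
  "omega theta s nu t c =
     measure (coord_distr theta s nu)
       {p \<in> space (coord_distr theta s nu). t * snd p - c < fst p \<and> fst p < c - t * snd p}"

text \<open>Joint law of ((theta-hat_k, sigma-hat_k))_{k<K} when Sigma_1 = diag(s_0^2,...,s_{K-1}^2):
  theta-hat ~ N_K(theta, Sigma_1) has independent coordinates and the diagonal entries of a
  Wishart matrix W_K(Sigma_1, nu)/nu with diagonal Sigma_1 are independent scaled chi-square,
  independent of theta-hat.\<close>
definition joint_distr :: "nat \<Rightarrow> (nat \<Rightarrow> real) \<Rightarrow> (nat \<Rightarrow> real) \<Rightarrow> real \<Rightarrow> (nat \<Rightarrow> real \<times> real) measure" where
  "joint_distr K theta s nu = (\<Pi>\<^sub>M k\<in>{..<K}. coord_distr (theta k) (s k) nu)"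

definition omegaK :: "nat \<Rightarrow> (nat \<Rightarrow> real) \<Rightarrow> (nat \<Rightarrow> real) \<Rightarrow> real \<Rightarrow> (nat \<Rightarrow> real) \<Rightarrow> (nat \<Rightarrow> real) \<Rightarrow> real" where
  "omegaK K theta s nu t c =
     measure (joint_distr K theta s nu)
       {x \<in> space (joint_distr K theta s nu).
          \<forall>k<K. t k * snd (x k) - c k < fst (x k) \<and> fst (x k) < c k - t k * snd (x k)}"

definition A_K :: "nat \<Rightarrow> real \<Rightarrow> (nat \<Rightarrow> real) \<Rightarrow> real \<Rightarrow> real \<Rightarrow> ((nat \<Rightarrow> real) \<times> (nat \<Rightarrow> real)) set" where
  "A_K K c0 s nu alpha0 =
     {(t, c). (\<forall>k<K. 0 \<le> t k) \<and> (\<forall>k<K. 0 < c k) \<and>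
        (SUP theta\<in>{theta. \<exists>k<K. \<bar>theta k\<bar> \<ge> c0}. omegaK K theta s nu t c) = alpha0 \<and>
        (\<forall>j<K. \<forall>k<K. omega c0 (s j) nu (t j) (c j) = omega c0 (s k) nu (t k) (c k))}"

end

theory Submission
  imports Defs
begin


definition Nd :: "real \<Rightarrow> real \<Rightarrow> real measure" where
  "Nd theta s = density lborel (\<lambda>x. ennreal (normal_density theta s x))"

definition G :: "real \<Rightarrow> real \<Rightarrow> real \<Rightarrow> real" where
  "G theta s r = measure (Nd theta s) {x. \<bar>x\<bar> < r}"

definition I :: "real \<Rightarrow> real \<Rightarrow> real" where
  "I r x = indicator {x. \<bar>x\<bar> < r} x"

lemma I_sets[measurable]: "{x::real. \<bar>x\<bar> < r} \<in> sets borel"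
  by measurable

lemma I_meas[measurable]: "I r \<in> borel_measurable borel"
  unfolding I_def by measurable

lemma integrable_I: "integrable lborel f \<Longrightarrow> integrable lborel (\<lambda>x. f x * I r x)"
  unfolding I_def by (rule integrable_real_mult_indicator) auto

lemma I_neg: "I r (- x) = I r x" by (simp add: I_def indicator_def)

lemma G_int: "G theta s r = (\<integral>x. normal_density theta s x * I r x \<partial>lborel)"
proof -
  have "G theta s r = enn2real (emeasure (Nd theta s) {x. \<bar>x\<bar> < r})"
    by (simp add: G_def measure_def)
  also have "emeasure (Nd theta s) {x. \<bar>x\<bar> < r} = (\<integral>\<^sup>+x. ennreal (normal_density theta s x) * indicator {x. \<bar>x\<bar> < r} x \<partial>lborel)"
    unfolding Nd_def by (rule emeasure_density) auto
  also have "\<dots> = (\<integral>\<^sup>+x. ennreal (normal_density theta s x * I r x) \<partial>lborel)"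
    by (intro nn_integral_cong) (auto simp: I_def indicator_def)
  also have "enn2real \<dots> = (\<integral>x. normal_density theta s x * I r x \<partial>lborel)"
    by (rule enn2real_nn_integral_eq_integral) (auto simp: I_def)
  finally show ?thesis .
qed

lemma G_sym: "G (- theta) s r = G theta s r"
proof -
  have "G (- theta) s r = (\<integral>x. normal_density (- theta) s x * I r x \<partial>lborel)"
    by (rule G_int)
  also have "\<dots> = \<bar>-1\<bar> *\<^sub>R (\<integral>x. normal_density (- theta) s (0 + (-1) * x) * I r (0 + (-1) * x) \<partial>lborel)"
    by (rule lborel_integral_real_affine) simp
  also have "\<dots> = (\<integral>x. normal_density theta s x * I r x \<partial>lborel)"
    by (simp add: normal_density_def I_neg power2_commute add.commute)
  finally show ?thesis by (simp add: G_int)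
qed

definition H :: "real \<Rightarrow> real \<Rightarrow> real \<Rightarrow> real" where
  "H s a x = normal_density a s x + normal_density (- a) s x"

lemma G_H: "2 * G a s r = (\<integral>x. H s a x * I r x \<partial>lborel)" if "s > 0"
proof -
  have "2 * G a s r = G a s r + G (-a) s r" by (simp add: G_sym)
  also have "\<dots> = (\<integral>x. normal_density a s x * I r x + normal_density (-a) s x * I r x \<partial>lborel)"
    unfolding G_int by (rule Bochner_Integration.integral_add[symmetric]) (auto intro!: integrable_I simp: that)
  finally show ?thesis by (simp add: H_def algebra_simps)
qed

lemma H_eq:
  "H s a x = 2 * normal_density 0 s x * exp (- a\<^sup>2 / (2 * s\<^sup>2)) * cosh (a * x / s\<^sup>2)"
proof (cases "s = 0")
  case True then show ?thesis by (simp add: H_def normal_density_def)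
next
  case False
  have e1: "exp (-(x - a)\<^sup>2 / (2 * s\<^sup>2)) = exp (- x\<^sup>2 / (2 * s\<^sup>2)) * exp (- a\<^sup>2 / (2 * s\<^sup>2)) * exp (a * x / s\<^sup>2)"
    unfolding exp_add[symmetric] using False by (intro arg_cong[where f=exp]) (simp add: field_simps power2_eq_square)
  have e2: "exp (-(x - - a)\<^sup>2 / (2 * s\<^sup>2)) = exp (- x\<^sup>2 / (2 * s\<^sup>2)) * exp (- a\<^sup>2 / (2 * s\<^sup>2)) * exp (- (a * x / s\<^sup>2))"
    unfolding exp_add[symmetric] using False by (intro arg_cong[where f=exp]) (simp add: field_simps power2_eq_square)
  show ?thesis
    unfolding H_def normal_density_def e1 e2 cosh_field_def
    by (simp add: algebra_simps add_divide_distrib)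
qed

lemma H_integral: "s > 0 \<Longrightarrow> (\<integral>x. H s a x \<partial>lborel) = 2"
  unfolding H_def by (subst Bochner_Integration.integral_add) (auto simp: integral_normal_density)

lemma integrable_H[simp]: "s > 0 \<Longrightarrow> integrable lborel (H s a)"
  unfolding H_def by auto


lemma single_crossing:
  fixes f :: "real \<Rightarrow> real"
  assumes int: "integrable lborel f" and tot: "0 \<le> (\<integral>x. f x \<partial>lborel)"
    and sc: "\<And>x y. \<bar>x\<bar> \<le> \<bar>y\<bar> \<Longrightarrow> 0 \<le> f y \<Longrightarrow> 0 \<le> f x"
  shows "0 \<le> (\<integral>x. f x * I r x \<partial>lborel)"
proof (cases "\<exists>y. r \<le> \<bar>y\<bar> \<and> 0 \<le> f y")
  case True
  then obtain y where y: "r \<le> \<bar>y\<bar>" "0 \<le> f y" by blast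
  show ?thesis
  proof (rule integral_nonneg_AE, rule AE_I2)
    fix x show "0 \<le> f x * I r x"
      using sc[of x y] y by (auto simp: I_def indicator_def)
  qed
next
  case False
  have "(\<integral>x. f x * I r x \<partial>lborel) = (\<integral>x. f x - f x * indicator {x. \<not> \<bar>x\<bar> < r} x \<partial>lborel)"
    by (intro Bochner_Integration.integral_cong) (auto simp: I_def indicator_def)
  also have eq2: "\<dots> = (\<integral>x. f x \<partial>lborel) - (\<integral>x. f x * indicator {x. \<not> \<bar>x\<bar> < r} x \<partial>lborel)"
    by (rule Bochner_Integration.integral_diff) (auto intro!: integrable_real_mult_indicator int)
  finally have eq: "(\<integral>x. f x * I r x \<partial>lborel) = (\<integral>x. f x \<partial>lborel) - (\<integral>x. f x * indicator {x. \<not> \<bar>x\<bar> < r} x \<partial>lborel)" .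
  have "(\<integral>x. f x * indicator {x. \<not> \<bar>x\<bar> < r} x \<partial>lborel) \<le> 0"
  proof -
    have "0 \<le> (\<integral>x. - (f x * indicator {x. \<not> \<bar>x\<bar> < r} x) \<partial>lborel)"
      by (rule integral_nonneg_AE, rule AE_I2) (use False in \<open>auto simp: indicator_def not_le intro: less_imp_le\<close>)
    then show ?thesis by simp
  qed
  then show ?thesis using tot eq by linarith
qed

lemma cosh_prod: "2 * cosh (u::real) * cosh v = cosh (u + v) + cosh (u - v)"
  by (simp add: cosh_add cosh_diff)

lemma cosh_le_abs: "\<bar>u\<bar> \<le> \<bar>v\<bar> \<Longrightarrow> cosh (u::real) \<le> cosh v"
proof -
  assume "\<bar>u\<bar> \<le> \<bar>v\<bar>"
  then have "cosh \<bar>u\<bar> \<le> cosh \<bar>v\<bar>" by (subst cosh_real_nonneg_le_iff) auto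
  then show ?thesis by simp
qed

lemma cosh_cross:
  fixes al be x y :: real
  assumes "0 \<le> al" "al \<le> be" "\<bar>x\<bar> \<le> \<bar>y\<bar>"
  shows "cosh (al * y) * cosh (be * x) \<le> cosh (al * x) * cosh (be * y)"
proof -
  define X where "X = \<bar>x\<bar>"
  define Y where "Y = \<bar>y\<bar>"
  have X: "0 \<le> X" "X \<le> Y" using assms by (auto simp: X_def Y_def)
  have c: "cosh (g * z) = cosh (g * \<bar>z\<bar>)" if "0 \<le> g" for g z :: real
  proof -
    have "g * \<bar>z\<bar> = \<bar>g * z\<bar>" using that by (simp add: abs_mult)
    then show ?thesis by simp
  qed
  have be: "0 \<le> be" using assms by linarith
  have "2 * (cosh (al * Y) * cosh (be * X)) = cosh (al * Y + be * X) + cosh (al * Y - be * X)"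
    using cosh_prod by (simp add: mult.assoc)
  also have "\<dots> \<le> cosh (al * X + be * Y) + cosh (al * X - be * Y)"
  proof (rule add_mono; rule cosh_le_abs)
    have "al * Y + be * X \<le> al * X + be * Y"
    proof -
      have "0 \<le> (be - al) * (Y - X)" using assms X by (intro mult_nonneg_nonneg) auto
      then show ?thesis by (simp add: algebra_simps)
    qed
    moreover have "0 \<le> al * Y + be * X" using assms X be by (intro add_nonneg_nonneg mult_nonneg_nonneg) auto
    ultimately show "\<bar>al * Y + be * X\<bar> \<le> \<bar>al * X + be * Y\<bar>" by simp
  next
    have h1: "al * X \<le> be * Y" using assms X by (intro mult_mono) auto
    have h2: "al * Y - be * X \<le> be * Y - al * X"
    proof -
      have "0 \<le> (be - al) * (Y + X)" using assms X by (intro mult_nonneg_nonneg) auto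
      then show ?thesis by (simp add: algebra_simps)
    qed
    have h3: "be * X - al * Y \<le> be * Y - al * X"
    proof -
      have "0 \<le> (be + al) * (Y - X)" using assms X by (intro mult_nonneg_nonneg) auto
      then show ?thesis by (simp add: algebra_simps)
    qed
    show "\<bar>al * Y - be * X\<bar> \<le> \<bar>al * X - be * Y\<bar>" using h1 h2 h3 by linarith
  qed
  also have "\<dots> = 2 * (cosh (al * X) * cosh (be * Y))"
    using cosh_prod by (simp add: mult.assoc)
  finally have "cosh (al * Y) * cosh (be * X) \<le> cosh (al * X) * cosh (be * Y)" by simp
  then show ?thesis
    using c[OF assms(1)] c[OF be] by (simp add: X_def Y_def)
qed


lemma H_pos_factor:
  assumes "s > 0"
  shows "H s a x = 2 * normal_density 0 s x * exp (- a\<^sup>2 / (2 * s\<^sup>2)) * cosh ((a / s\<^sup>2) * x)"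
  using H_eq[of s a x] by simp

lemma G_mono_theta:
  assumes s: "s > 0" and a: "0 \<le> a" "a \<le> \<bar>theta\<bar>"
  shows "G theta s r \<le> G a s r"
proof -
  define b where "b = \<bar>theta\<bar>"
  have Gb: "G theta s r = G b s r"
    by (cases "theta \<ge> 0") (auto simp: b_def G_sym[of theta, symmetric])
  define f where "f x = H s a x - H s b x" for x
  have intf: "integrable lborel f" unfolding f_def using s by auto
  have totf: "(\<integral>x. f x \<partial>lborel) = 0"
    unfolding f_def using s by (subst Bochner_Integration.integral_diff) (auto simp: H_integral)
  define Ea where "Ea = exp (- a\<^sup>2 / (2 * s\<^sup>2))"
  define Eb where "Eb = exp (- b\<^sup>2 / (2 * s\<^sup>2))"
  define al where "al = a / s\<^sup>2"
  define be where "be = b / s\<^sup>2"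
  have albe: "0 \<le> al" "al \<le> be"
    using a s by (auto simp: al_def be_def b_def divide_right_mono)
  have fx: "f x = 2 * normal_density 0 s x * (Ea * cosh (al * x) - Eb * cosh (be * x))" for x
    unfolding f_def H_pos_factor[OF s] Ea_def Eb_def al_def be_def by (simp add: algebra_simps)
  have sc: "0 \<le> f x" if xy: "\<bar>x\<bar> \<le> \<bar>y\<bar>" and fy: "0 \<le> f y" for x y
  proof -
    have pos: "\<And>z. 0 < 2 * normal_density 0 s z" using s by (simp add: normal_density_pos)
    have y: "Eb * cosh (be * y) \<le> Ea * cosh (al * y)"
      using fy pos[of y] unfolding fx by (simp add: zero_le_mult_iff)
    have cc: "cosh (al * y) * cosh (be * x) \<le> cosh (al * x) * cosh (be * y)"
      by (rule cosh_cross[OF albe xy])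
    have Eb0: "0 \<le> Eb" by (simp add: Eb_def)
    have "(Eb * cosh (be * x)) * cosh (al * y) = Eb * (cosh (al * y) * cosh (be * x))" by (simp add: algebra_simps)
    also have "\<dots> \<le> Eb * (cosh (al * x) * cosh (be * y))" by (rule mult_left_mono[OF cc Eb0])
    also have "\<dots> = (Eb * cosh (be * y)) * cosh (al * x)" by (simp add: algebra_simps)
    also have "\<dots> \<le> (Ea * cosh (al * y)) * cosh (al * x)" by (rule mult_right_mono[OF y]) simp
    also have "\<dots> = (Ea * cosh (al * x)) * cosh (al * y)" by (simp add: algebra_simps)
    finally have "Eb * cosh (be * x) \<le> Ea * cosh (al * x)"
      by (rule mult_right_le_imp_le) simp
    then show ?thesis unfolding fx using pos[of x] by simp
  qed
  have "0 \<le> (\<integral>x. f x * I r x \<partial>lborel)"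
    by (rule single_crossing[OF intf]) (use totf sc in auto)
  also have "(\<integral>x. f x * I r x \<partial>lborel) = (\<integral>x. H s a x * I r x \<partial>lborel) - (\<integral>x. H s b x * I r x \<partial>lborel)"
    unfolding f_def left_diff_distrib
    by (rule Bochner_Integration.integral_diff) (auto intro!: integrable_I simp: s)
  also have "\<dots> = 2 * G a s r - 2 * G b s r" by (simp add: G_H[OF s])
  finally show ?thesis using Gb by simp
qed

lemma tangent:
  fixes s c0 b r :: real
  assumes s: "s > 0" and c0: "c0 > 0" and b0: "0 \<le> b"
  defines "lam \<equiv> exp (c0\<^sup>2 / (2 * s\<^sup>2)) / cosh (c0 * b / s\<^sup>2)"
  shows "0 \<le> lam"
    and "G 0 s r - lam * G c0 s r \<le> G 0 s b - lam * G c0 s b"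
    and "lam * G c0 s b \<le> G 0 s b"
proof -
  show "0 \<le> lam" unfolding lam_def by simp
  define w where "w x = normal_density 0 s x * (1 - cosh ((c0 / s\<^sup>2) * x) / cosh ((c0 / s\<^sup>2) * b))" for x
  have ee: "exp (c0\<^sup>2 / (2 * s\<^sup>2)) * exp (- c0\<^sup>2 / (2 * s\<^sup>2)) = 1"
    by (simp add: exp_minus[symmetric] exp_add[symmetric])
  have wx: "w x = normal_density 0 s x - lam / 2 * H s c0 x" for x
  proof -
    have "lam / 2 * H s c0 x = normal_density 0 s x * (exp (c0\<^sup>2 / (2 * s\<^sup>2)) * exp (- c0\<^sup>2 / (2 * s\<^sup>2))) * cosh ((c0 / s\<^sup>2) * x) / cosh ((c0 / s\<^sup>2) * b)"
      unfolding H_pos_factor[OF s] lam_def by simp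
    then show ?thesis unfolding ee w_def by (simp add: algebra_simps)
  qed
  have wI: "(\<integral>x. w x * I r x \<partial>lborel) = G 0 s r - lam * G c0 s r" for r
  proof -
    have "(\<integral>x. w x * I r x \<partial>lborel) = (\<integral>x. normal_density 0 s x * I r x - (lam / 2) * (H s c0 x * I r x) \<partial>lborel)"
      unfolding wx by (simp add: algebra_simps)
    also have "\<dots> = (\<integral>x. normal_density 0 s x * I r x \<partial>lborel) - (\<integral>x. (lam / 2) * (H s c0 x * I r x) \<partial>lborel)"
      by (rule Bochner_Integration.integral_diff; intro integrable_mult_right integrable_I) (auto simp: s)
    also have "\<dots> = G 0 s r - (lam / 2) * (2 * G c0 s r)"
      by (simp only: integral_mult_right_zero G_H[OF s] G_int[of 0])
    finally show ?thesis by simp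
  qed
  have k: "0 < c0 / s\<^sup>2" using s c0 by simp
  have wpos: "0 \<le> w x" if "\<bar>x\<bar> < \<bar>b\<bar>" for x
  proof -
    have "cosh ((c0 / s\<^sup>2) * x) \<le> cosh ((c0 / s\<^sup>2) * b)"
      using that k by (intro cosh_le_abs, unfold abs_mult abs_of_pos[OF k]) (intro mult_left_mono, auto)
    then show ?thesis unfolding w_def by (simp add: s)
  qed
  have wneg: "w x \<le> 0" if "\<bar>b\<bar> \<le> \<bar>x\<bar>" for x
  proof -
    have "cosh ((c0 / s\<^sup>2) * b) \<le> cosh ((c0 / s\<^sup>2) * x)"
      using that k by (intro cosh_le_abs, unfold abs_mult abs_of_pos[OF k]) (intro mult_left_mono, auto)
    then show ?thesis unfolding w_def by (simp add: mult_nonneg_nonpos)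
  qed
  show "G 0 s r - lam * G c0 s r \<le> G 0 s b - lam * G c0 s b"
  proof -
    have "(\<integral>x. w x * I r x \<partial>lborel) \<le> (\<integral>x. w x * I b x \<partial>lborel)"
    proof (rule Bochner_Integration.integral_mono)
      show "integrable lborel (\<lambda>x. w x * I r x)" "integrable lborel (\<lambda>x. w x * I b x)"
        unfolding wx using s by (auto intro!: integrable_I)
      fix x
      show "w x * I r x \<le> w x * I b x"
        using wpos[of x] wneg[of x] b0 by (auto simp: I_def indicator_def)
    qed
    then show ?thesis by (simp add: wI)
  qed
  show "lam * G c0 s b \<le> G 0 s b"
  proof -
    have "0 \<le> (\<integral>x. w x * I b x \<partial>lborel)"
      by (rule integral_nonneg_AE, rule AE_I2) (use wpos b0 in \<open>auto simp: I_def indicator_def\<close>)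
    then show ?thesis by (simp add: wI)
  qed
qed



lemma chisq_aux: fixes x a g :: real assumes "x > 0" "g > 0"
  shows "2 * ((2 * x) powr (a - 1) * exp (- (2 * x) / 2) / (2 powr a * g)) = x powr (a - 1) / exp x * (1 / g)"
proof -
  have p1: "(2 * x) powr (a - 1) = 2 powr (a - 1) * x powr (a - 1)"
    using assms by (simp add: powr_mult)
  have p2: "2 * 2 powr (a - 1) = (2::real) powr a"
    by (simp add: powr_diff)
  have e: "exp (- (2 * x) / 2) = inverse (exp x)"
    by (simp add: exp_minus)
  have "2 * ((2 * x) powr (a - 1) * exp (- (2 * x) / 2) / (2 powr a * g)) = (2 * 2 powr (a - 1)) * x powr (a - 1) * inverse (exp x) / (2 powr a * g)"
    unfolding p1 e by (simp only: mult_ac times_divide_eq_right)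
  also have "\<dots> = x powr (a - 1) / exp x * (1 / g)"
    unfolding p2 using assms by (simp add: divide_inverse)
  finally show ?thesis .
qed

lemma chisq_meas[measurable]: "chisq_density nu \<in> borel_measurable borel"
  unfolding chisq_density_def by measurable

lemma chisq_nn_integral:
  assumes nu: "nu > 0"
  shows "(\<integral>\<^sup>+x. ennreal (chisq_density nu x) \<partial>lborel) = 1"
proof -
  define a where "a = nu / 2"
  have a: "a > 0" using nu by (simp add: a_def)
  have meas: "(\<lambda>x. ennreal (chisq_density nu x)) \<in> borel_measurable borel"
    by measurable
  have "(\<integral>\<^sup>+x. ennreal (chisq_density nu x) \<partial>lborel)
      = ennreal \<bar>2::real\<bar> * (\<integral>\<^sup>+x. ennreal (chisq_density nu (0 + 2 * x)) \<partial>lborel)"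
    by (rule nn_integral_real_affine[OF meas]) simp
  also have "\<dots> = (\<integral>\<^sup>+x. 2 * ennreal (chisq_density nu (0 + 2 * x)) \<partial>lborel)"
    by (subst nn_integral_cmult) auto
  also have "\<dots> = (\<integral>\<^sup>+x. ennreal (indicator {0..} x * x powr (a - 1) / exp x) * ennreal (1 / Gamma a) \<partial>lborel)"
  proof (intro nn_integral_cong)
    fix x :: real
    show "2 * ennreal (chisq_density nu (0 + 2 * x)) = ennreal (indicator {0..} x * x powr (a - 1) / exp x) * ennreal (1 / Gamma a)"
    proof (cases "x > 0")
      case True
      have g: "Gamma a > 0" using a by (simp add: Gamma_real_pos)
      have "2 * chisq_density nu (2 * x) = 2 * ((2 * x) powr (a - 1) * exp (- (2 * x) / 2) / (2 powr a * Gamma a))"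
        using True unfolding chisq_density_def a_def by simp
      also have "\<dots> = x powr (a - 1) / exp x * (1 / Gamma a)"
        by (rule chisq_aux[OF True g])
      also have "\<dots> = indicator {0..} x * x powr (a - 1) / exp x * (1 / Gamma a)"
        using True by simp
      finally have "2 * chisq_density nu (2 * x) = indicator {0..} x * x powr (a - 1) / exp x * (1 / Gamma a)" .
      then have "ennreal (2 * chisq_density nu (2 * x)) = ennreal (indicator {0..} x * x powr (a - 1) / exp x * (1 / Gamma a))"
        by simp
      also have "\<dots> = ennreal (indicator {0..} x * x powr (a - 1) / exp x) * ennreal (1 / Gamma a)"
        by (rule ennreal_mult) (use True g in auto)
      finally show ?thesis by (simp add: ennreal_mult')
    next
      case False
      then show ?thesis
        by (cases "x = 0") (auto simp: chisq_density_def indicator_def)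
    qed
  qed
  also have "\<dots> = (\<integral>\<^sup>+x. ennreal (indicator {0..} x * x powr (a - 1) / exp x) \<partial>lborel) * ennreal (1 / Gamma a)"
    by (rule nn_integral_multc) measurable
  also have "\<dots> = ennreal (Gamma a) * ennreal (1 / Gamma a)"
    using Gamma_conv_nn_integral_real[OF a] by simp
  also have "\<dots> = 1"
  proof -
    have "Gamma a > 0" using a by (rule Gamma_real_pos)
    then show ?thesis by (simp add: ennreal_mult'[symmetric])
  qed
  finally show ?thesis .
qed

lemma prob_space_S:
  assumes "nu > 0"
  shows "prob_space (sigma_hat_distr s nu)"
proof -
  have "prob_space (density lborel (\<lambda>x. ennreal (chisq_density nu x)))"
    by (rule prob_spaceI) (subst emeasure_density, auto simp: chisq_nn_integral[OF assms])
  then show ?thesis unfolding sigma_hat_distr_def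
    by (intro prob_space.prob_space_distr) auto
qed

lemma prob_space_coord:
  assumes "nu > 0" "s > 0"
  shows "prob_space (coord_distr theta s nu)"
  unfolding coord_distr_def
  by (intro prob_space_pair prob_space_normal_density prob_space_S assms)


lemma prob_space_Nd: "s > 0 \<Longrightarrow> prob_space (Nd theta s)"
  unfolding Nd_def by (rule prob_space_normal_density)

lemma G_mono: assumes "s > 0" shows "mono (G theta s)"
proof (rule monoI)
  fix r r' :: real assume "r \<le> r'"
  interpret prob_space "Nd theta s" using prob_space_Nd[OF assms] .
  show "G theta s r \<le> G theta s r'"
    unfolding G_def using \<open>r \<le> r'\<close>
    by (intro finite_measure_mono) (auto simp: Nd_def)
qed

lemma G_nonneg: "0 \<le> G theta s r"
  unfolding G_def by simp

lemma G_le1: "s > 0 \<Longrightarrow> G theta s r \<le> 1"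
  unfolding G_def using prob_space.prob_le_1[OF prob_space_Nd] by blast

lemma G_meas[measurable]: "s > 0 \<Longrightarrow> G theta s \<in> borel_measurable borel"
  by (rule borel_measurable_mono[OF G_mono])

lemma omega_eq:
  assumes s: "s > 0" and nu: "nu > 0"
  shows "omega theta s nu t c = (\<integral>y. G theta s (c - t * y) \<partial>sigma_hat_distr s nu)"
proof -
  define N where "N = Nd theta s"
  define S where "S = sigma_hat_distr s nu"
  interpret N: prob_space N unfolding N_def by (rule prob_space_Nd[OF s])
  interpret S: prob_space S unfolding S_def by (rule prob_space_S[OF nu])
  interpret P: pair_prob_space N S by unfold_locales
  have spS: "space S = UNIV" by (simp add: S_def sigma_hat_distr_def)
  have spN: "space N = UNIV" by (simp add: N_def Nd_def)
  have setsS[measurable_cong]: "sets S = sets borel" by (simp add: S_def sigma_hat_distr_def)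
  have setsN[measurable_cong]: "sets N = sets borel" by (simp add: N_def Nd_def)
  have cd: "coord_distr theta s nu = N \<Otimes>\<^sub>M S"
    by (simp add: coord_distr_def N_def Nd_def S_def)
  define E where "E = {p \<in> space (N \<Otimes>\<^sub>M S). t * snd p - c < fst p \<and> fst p < c - t * snd p}"
  have E: "E \<in> sets (N \<Otimes>\<^sub>M S)"
    unfolding E_def by measurable
  have slice: "\<And>y. (\<lambda>x. (x, y)) -` E = {x. \<bar>x\<bar> < c - t * y}"
    by (auto simp: E_def space_pair_measure spN spS)
  have em: "\<And>y. emeasure N {x. \<bar>x\<bar> < c - t * y} = ennreal (G theta s (c - t * y))"
    by (simp add: G_def N_def[symmetric] N.emeasure_eq_measure)
  have "omega theta s nu t c = measure (N \<Otimes>\<^sub>M S) E"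
    unfolding omega_def cd E_def ..
  also have "\<dots> = enn2real (emeasure (N \<Otimes>\<^sub>M S) E)"
    by (simp add: measure_def)
  also have "emeasure (N \<Otimes>\<^sub>M S) E = (\<integral>\<^sup>+y. ennreal (G theta s (c - t * y)) \<partial>S)"
    using P.emeasure_pair_measure_alt2[OF E] by (simp add: slice em)
  also have "enn2real \<dots> = (\<integral>y. G theta s (c - t * y) \<partial>S)"
    by (rule enn2real_nn_integral_eq_integral) (auto simp: G_nonneg s)
  finally show ?thesis by (simp add: S_def)
qed

lemma omegaK_eq:
  assumes s: "s > 0" and nu: "nu > 0"
  shows "omegaK K theta (\<lambda>k. s) nu t c = (\<Prod>k<K. omega (theta k) s nu (t k) (c k))"
proof -
  define M where "M = (\<lambda>k. coord_distr (theta k) s nu)"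
  interpret product_sigma_finite M
    unfolding product_sigma_finite_def M_def
    using prob_space_imp_sigma_finite prob_space_coord s nu by blast
  have spM: "\<And>k. space (M k) = UNIV"
    by (simp add: M_def coord_distr_def space_pair_measure Nd_def sigma_hat_distr_def)
  define A where "A = (\<lambda>k. {p. t k * snd p - c k < fst p \<and> fst p < c k - t k * snd p})"
  have A: "\<And>k. A k \<in> sets (M k)"
  proof -
    fix k
    have [measurable_cong]: "sets (M k) = sets (borel \<Otimes>\<^sub>M borel)"
      unfolding M_def coord_distr_def sigma_hat_distr_def
      by (rule sets_pair_measure_cong) auto
    have "{p \<in> space (M k). t k * snd p - c k < fst p \<and> fst p < c k - t k * snd p} \<in> sets (M k)"
      by measurable
    then show "A k \<in> sets (M k)" by (simp add: A_def spM)
  qed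
  have set_eq: "{x \<in> space (joint_distr K theta (\<lambda>k. s) nu).
          \<forall>k<K. t k * snd (x k) - c k < fst (x k) \<and> fst (x k) < c k - t k * snd (x k)}
        = Pi\<^sub>E {..<K} A"
    by (auto simp: joint_distr_def M_def[symmetric] space_PiM spM A_def PiE_def Pi_def)
  have om: "\<And>k. omega (theta k) s nu (t k) (c k) = measure (M k) (A k)"
    by (simp add: omega_def M_def A_def[unfolded M_def] spM[unfolded M_def])
  have "omegaK K theta (\<lambda>k. s) nu t c = measure (Pi\<^sub>M {..<K} M) (Pi\<^sub>E {..<K} A)"
    unfolding omegaK_def set_eq by (simp add: joint_distr_def M_def)
  also have "\<dots> = enn2real (\<Prod>k<K. emeasure (M k) (A k))"
    by (simp add: measure_def emeasure_PiM A)
  also have "\<dots> = enn2real (\<Prod>k<K. ennreal (measure (M k) (A k)))"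
    using prob_space_coord[OF nu s] by (simp add: M_def finite_measure.emeasure_eq_measure prob_space_def)
  also have "\<dots> = (\<Prod>k<K. measure (M k) (A k))"
    by (simp add: prod_ennreal prod_nonneg)
  finally show ?thesis by (simp add: om)
qed



lemma omega_t0:
  assumes s: "s > 0" and nu: "nu > 0"
  shows "omega theta s nu 0 cc = G theta s cc"
proof -
  interpret S: prob_space "sigma_hat_distr s nu" by (rule prob_space_S[OF nu])
  show ?thesis by (simp add: omega_eq[OF s nu] S.prob_space)
qed

lemma omega_bounds:
  assumes s: "s > 0" and nu: "nu > 0"
  shows "0 \<le> omega theta s nu tt cc" "omega theta s nu tt cc \<le> 1"
proof -
  interpret P: prob_space "coord_distr theta s nu" by (rule prob_space_coord[OF nu s])
  show "0 \<le> omega theta s nu tt cc" "omega theta s nu tt cc \<le> 1"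
    unfolding omega_def by (auto intro: P.prob_le_1)
qed

lemma omegaK_le1:
  assumes s: "s > 0" and nu: "nu > 0"
  shows "omegaK K theta (\<lambda>k. s) nu tt cc \<le> 1"
  unfolding omegaK_eq[OF s nu] by (rule prod_le_1) (auto simp: omega_bounds[OF s nu])

lemma integrated_tangent:
  fixes s c0 b :: real
  assumes s: "s > 0" and nu: "nu > 0" and c0: "c0 > 0" and b0: "0 \<le> b"
  defines "lam \<equiv> exp (c0\<^sup>2 / (2 * s\<^sup>2)) / cosh (c0 * b / s\<^sup>2)"
  shows "omega 0 s nu tt cc - lam * omega c0 s nu tt cc \<le> G 0 s b - lam * G c0 s b"
proof -
  define S where "S = sigma_hat_distr s nu"
  interpret S: prob_space S unfolding S_def by (rule prob_space_S[OF nu])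
  have [measurable_cong]: "sets S = sets borel" by (simp add: S_def sigma_hat_distr_def)
  have int: "integrable S (\<lambda>y. G a s (cc - tt * y))" for a
  proof (rule S.integrable_const_bound[where B=1])
    show "AE x in S. norm (G a s (cc - tt * x)) \<le> 1"
      using G_le1[OF s] G_nonneg by auto
    show "(\<lambda>y. G a s (cc - tt * y)) \<in> borel_measurable S"
      using G_meas[OF s] by measurable
  qed
  have "omega 0 s nu tt cc - lam * omega c0 s nu tt cc
      = (\<integral>y. G 0 s (cc - tt * y) - lam * G c0 s (cc - tt * y) \<partial>S)"
    unfolding omega_eq[OF s nu] S_def[symmetric]
    by (subst Bochner_Integration.integral_diff) (auto intro: int)
  also have "\<dots> \<le> (\<integral>y. G 0 s b - lam * G c0 s b \<partial>S)"
    by (rule Bochner_Integration.integral_mono)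
       (auto intro!: int tangent(2)[OF s c0 b0, folded lam_def])
  also have "\<dots> = G 0 s b - lam * G c0 s b" by (simp add: S.prob_space)
  finally show ?thesis .
qed


theorem proposition2:
  fixes K :: nat and c0 alpha0 nu2 sigma1 :: real
    and t c cstar :: "nat \<Rightarrow> real"
  assumes "K \<ge> 2" and "c0 > 0" and "0 < alpha0" and "alpha0 < 1/2"
    and "nu2 > 0" and "sigma1 > 0"
    and "(t, c) \<in> A_K K c0 (\<lambda>k. sigma1) nu2 alpha0"
    and "((\<lambda>k. 0), cstar) \<in> A_K K c0 (\<lambda>k. sigma1) nu2 alpha0"
  shows "omegaK K (\<lambda>k. 0) (\<lambda>k. sigma1) nu2 t c
         \<le> omegaK K (\<lambda>k. 0) (\<lambda>k. sigma1) nu2 (\<lambda>k. 0) cstar"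
proof -
  note s = assms(6) and nu = assms(5) and c0 = assms(2)
  have K0: "0 < K" using assms(1) by simp
  define T where "T = {theta :: nat \<Rightarrow> real. \<exists>k<K. \<bar>theta k\<bar> \<ge> c0}"
  have At: "(\<forall>k<K. 0 \<le> t k) \<and> (\<forall>k<K. 0 < c k) \<and> (SUP theta\<in>T. omegaK K theta (\<lambda>k. sigma1) nu2 t c) = alpha0 \<and>
      (\<forall>j<K. \<forall>k<K. omega c0 sigma1 nu2 (t j) (c j) = omega c0 sigma1 nu2 (t k) (c k))"
    using assms(7) unfolding A_K_def T_def by (simp only: mem_Collect_eq case_prod_conv) blast
  have As: "(\<forall>k<K. 0 \<le> (0::real)) \<and> (\<forall>k<K. 0 < cstar k) \<and> (SUP theta\<in>T. omegaK K theta (\<lambda>k. sigma1) nu2 (\<lambda>k. 0) cstar) = alpha0 \<and>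
      (\<forall>j<K. \<forall>k<K. omega c0 sigma1 nu2 0 (cstar j) = omega c0 sigma1 nu2 0 (cstar k))"
    using assms(8) unfolding A_K_def T_def by (simp only: mem_Collect_eq case_prod_conv) blast
  note supt = At[THEN conjunct2, THEN conjunct2, THEN conjunct1]
  note eqt = At[THEN conjunct2, THEN conjunct2, THEN conjunct2]
  note cspos = As[THEN conjunct2, THEN conjunct1]
  note sups = As[THEN conjunct2, THEN conjunct2, THEN conjunct1]
  note eqs = As[THEN conjunct2, THEN conjunct2, THEN conjunct2]
  define p where "p j = omega 0 sigma1 nu2 (t j) (c j)" for j
  define ps where "ps j = G 0 sigma1 (cstar j)" for j
  define be where "be = omega c0 sigma1 nu2 (t 0) (c 0)"
  define bs where "bs = G c0 sigma1 (cstar 0)"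
  have beq: "omega c0 sigma1 nu2 (t j) (c j) = be" if "j < K" for j
    using eqt[rule_format, OF that K0] by (simp only: be_def)
  have bseq: "G c0 sigma1 (cstar j) = bs" if "j < K" for j
    using eqs[rule_format, OF that K0] by (simp only: bs_def omega_t0[OF s nu])
  have p0: "0 \<le> p j" for j unfolding p_def by (rule omega_bounds[OF s nu])
  have ps0: "0 \<le> ps j" for j unfolding ps_def by (rule G_nonneg)
  have bs0: "0 \<le> bs" unfolding bs_def by (rule G_nonneg)
  have LHS: "omegaK K (\<lambda>k. 0) (\<lambda>k. sigma1) nu2 t c = (\<Prod>j<K. p j)"
    by (simp add: omegaK_eq[OF s nu] p_def)
  have RHS: "omegaK K (\<lambda>k. 0) (\<lambda>k. sigma1) nu2 (\<lambda>k. 0) cstar = (\<Prod>j<K. ps j)"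
    by (simp add: omegaK_eq[OF s nu] ps_def omega_t0[OF s nu])
  have F1: "be * (\<Prod>j\<in>{..<K} - {k}. p j) \<le> alpha0" if k: "k < K" for k
  proof -
    define th where "th = (\<lambda>j::nat. if j = k then c0 else 0)"
    have thT: "th \<in> T" using k c0 by (auto simp: T_def th_def)
    have bdd: "bdd_above ((\<lambda>theta. omegaK K theta (\<lambda>k. sigma1) nu2 t c) ` T)"
      by (rule bdd_aboveI[where M=1]) (auto intro: omegaK_le1[OF s nu])
    have "omegaK K th (\<lambda>k. sigma1) nu2 t c = (\<Prod>j<K. omega (th j) sigma1 nu2 (t j) (c j))"
      by (rule omegaK_eq[OF s nu])
    also have "\<dots> = omega (th k) sigma1 nu2 (t k) (c k) * (\<Prod>j\<in>{..<K} - {k}. omega (th j) sigma1 nu2 (t j) (c j))"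
      using k by (subst prod.remove[of _ k]) auto
    also have "\<dots> = be * (\<Prod>j\<in>{..<K} - {k}. p j)"
      using k by (auto simp: th_def beq p_def intro!: prod.cong)
    finally have "be * (\<Prod>j\<in>{..<K} - {k}. p j) = omegaK K th (\<lambda>k. sigma1) nu2 t c" by simp
    also have "\<dots> \<le> alpha0"
      unfolding supt[symmetric] by (rule cSUP_upper[OF thT bdd])
    finally show ?thesis .
  qed
  define B where "B k = bs * (\<Prod>j\<in>{..<K} - {k}. ps j)" for k
  define MB where "MB = Max (B ` {..<K})"
  have MBin: "MB \<in> B ` {..<K}" unfolding MB_def using K0 by (intro Max_in) auto
  then obtain k' where k': "k' < K" "B k' = MB" by auto
  have Ble: "B k \<le> B k'" if "k < K" for k
    using that k' unfolding MB_def by (auto intro: Max_ge)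
  have F2: "alpha0 \<le> B k'"
  proof -
    have "T \<noteq> {}" using K0 c0 by (auto simp: T_def intro!: exI[of _ "\<lambda>_. c0"])
    then have "(SUP theta\<in>T. omegaK K theta (\<lambda>k. sigma1) nu2 (\<lambda>k. 0) cstar) \<le> B k'"
    proof (rule cSUP_least)
      fix theta assume "theta \<in> T"
      then obtain k where k: "k < K" "c0 \<le> \<bar>theta k\<bar>" by (auto simp: T_def)
      have "omegaK K theta (\<lambda>k. sigma1) nu2 (\<lambda>k. 0) cstar = (\<Prod>j<K. G (theta j) sigma1 (cstar j))"
        by (simp add: omegaK_eq[OF s nu] omega_t0[OF s nu])
      also have "\<dots> = G (theta k) sigma1 (cstar k) * (\<Prod>j\<in>{..<K} - {k}. G (theta j) sigma1 (cstar j))"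
        using k by (subst prod.remove[of _ k]) auto
      also have "\<dots> \<le> bs * (\<Prod>j\<in>{..<K} - {k}. ps j)"
      proof (rule mult_mono)
        show "G (theta k) sigma1 (cstar k) \<le> bs"
          using G_mono_theta[OF s, of c0 "theta k" "cstar k"] c0 k bseq by auto
        show "(\<Prod>j\<in>{..<K} - {k}. G (theta j) sigma1 (cstar j)) \<le> (\<Prod>j\<in>{..<K} - {k}. ps j)"
          by (rule prod_mono) (auto simp: G_nonneg ps_def intro!: G_mono_theta[OF s])
      qed (auto simp: bs0 G_nonneg intro!: prod_nonneg)
      also have "\<dots> = B k" by (simp add: B_def)
      also have "\<dots> \<le> B k'" using Ble k by simp
      finally show "omegaK K theta (\<lambda>k. sigma1) nu2 (\<lambda>k. 0) cstar \<le> B k'" .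
    qed
    then show ?thesis using sups by simp
  qed
  have tan: "\<exists>lam\<ge>0. p j - lam * be \<le> ps j - lam * bs \<and> lam * bs \<le> ps j" if j: "j < K" for j
  proof -
    define lam where "lam = exp (c0\<^sup>2 / (2 * sigma1\<^sup>2)) / cosh (c0 * cstar j / sigma1\<^sup>2)"
    have b0: "0 \<le> cstar j" using cspos j by auto
    have "p j - lam * be \<le> ps j - lam * G c0 sigma1 (cstar j)"
      using integrated_tangent[OF s nu c0 b0, of "t j" "c j"] beq[OF j]
      by (simp add: p_def ps_def lam_def)
    moreover have "lam * G c0 sigma1 (cstar j) \<le> ps j"
      using tangent(3)[OF s c0 b0] by (simp add: ps_def lam_def)
    moreover have "0 \<le> lam" using tangent(1)[OF s c0 b0] by (simp add: lam_def)
    ultimately show ?thesis using bseq[OF j] by auto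
  qed
  show ?thesis
  proof (cases "be \<le> bs")
    case True
    have "(\<Prod>j<K. p j) \<le> (\<Prod>j<K. ps j)"
    proof (rule prod_mono)
      fix j assume "j \<in> {..<K}"
      then obtain lam where lam: "0 \<le> lam" "p j - lam * be \<le> ps j - lam * bs"
        using tan by auto
      have "lam * be \<le> lam * bs" using True lam(1) by (rule mult_left_mono)
      then show "0 \<le> p j \<and> p j \<le> ps j" using lam p0 by auto
    qed
    then show ?thesis using LHS RHS by simp
  next
    case False
    define P' where "P' = (\<Prod>j\<in>{..<K} - {k'}. ps j)"
    define Q' where "Q' = (\<Prod>j\<in>{..<K} - {k'}. p j)"
    have P'0: "0 \<le> P'" unfolding P'_def by (rule prod_nonneg) (auto simp: ps0)
    have Q'0: "0 \<le> Q'" unfolding Q'_def by (rule prod_nonneg) (auto simp: p0)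
    have a_le: "alpha0 \<le> bs * P'" using F2 by (simp add: B_def P'_def)
    have bspos: "0 < bs"
    proof (rule ccontr)
      assume "\<not> 0 < bs" then have "bs = 0" using bs0 by simp
      then show False using a_le assms(3) by simp
    qed
    have bepos: "0 < be" using False bspos by simp
    have bQ: "be * Q' \<le> alpha0" using F1[OF k'(1)] by (simp add: Q'_def)
    obtain lam where lam: "0 \<le> lam" "p k' - lam * be \<le> ps k' - lam * bs" "lam * bs \<le> ps k'"
      using tan[OF k'(1)] by auto
    have key: "p k' * bs \<le> ps k' * be"
    proof -
      have "p k' * bs \<le> (ps k' + lam * (be - bs)) * bs"
        using lam(2) bs0 by (intro mult_right_mono) (auto simp: algebra_simps)
      also have "\<dots> = ps k' * bs + (lam * bs) * (be - bs)" by (simp add: algebra_simps)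
      also have "\<dots> \<le> ps k' * bs + ps k' * (be - bs)"
        using lam(3) False by (intro add_left_mono mult_right_mono) auto
      also have "\<dots> = ps k' * be" by (simp add: algebra_simps)
      finally show ?thesis .
    qed
    have "(p k' * Q') * be = p k' * (be * Q')" by (simp add: algebra_simps)
    also have "\<dots> \<le> p k' * alpha0" using bQ p0 by (intro mult_left_mono) auto
    also have "\<dots> \<le> p k' * (bs * P')" using a_le p0 by (intro mult_left_mono) auto
    also have "\<dots> = (p k' * bs) * P'" by (simp add: algebra_simps)
    also have "\<dots> \<le> (ps k' * be) * P'" using key P'0 by (intro mult_right_mono)
    also have "\<dots> = (ps k' * P') * be" by (simp add: algebra_simps)
    finally have "p k' * Q' \<le> ps k' * P'" using bepos by simp
    moreover have "(\<Prod>j<K. p j) = p k' * Q'"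
      unfolding Q'_def using k'(1) by (subst prod.remove[of _ k']) auto
    moreover have "(\<Prod>j<K. ps j) = ps k' * P'"
      unfolding P'_def using k'(1) by (subst prod.remove[of _ k']) auto
    ultimately show ?thesis using LHS RHS by simp
  qed
qed

end
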